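(* Let $q$ be a prime power with $q\equiv 1\pmod 3$, let $n$ be a positive integer and $a\in\mathbb{F}_q$. Then $f(x)=x^n\big(x^{\frac{q-1}{3}}+a\big)$ is a permutation polynomial of $\mathbb{F}_q$ if and only if all of the following hold: (a) $\gcd\big(n,\frac{q-1}{3}\big)=1$; (b) $a\notin\{-1,-\xi,-\xi^2\}$; (c) $\eta\big(\frac{\xi+a}{1+a}\big)\neq\delta^{2n}$; (d) $\eta\big(\frac{1+a}{\xi^2+a}\big)\neq\delta^{2n}$; (e) $\eta\big(\frac{\xi^2+a}{\xi+a}\big)\neq\delta^{2n}$.
   Context: A polynomial is a permutation polynomial of $\mathbb{F}_q$ if it induces a bijection of $\mathbb{F}_q$. Let $q\equiv 1\pmod 3$, let $\xi\in\mathbb{F}_q$ be a fixed cube root of unity with $\xi\neq 1$, and let $\delta\in\mathbb{C}$ be a fixed cube root of unity with $\delta\neq1$. Let $\eta:\mathbb{F}_q\to\mathbb{C}$ be the cubic multiplicative character defined by $\eta(0)=0$ and, for $c\in\mathbb{F}_q^*$ and integers $j$, $\eta(c)=\delta^j$ if and only if $c^{\frac{q-1}{3}}=\xi^j$. We write $\eta^2(c)$ for $\eta(c)^2$. *)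

theory Defs
  imports Complex_Main "HOL-Computational_Algebra.Polynomial"
begin

definition permutation_polynomial :: "'a::{field,finite} poly \<Rightarrow> bool" where
  "permutation_polynomial p \<longleftrightarrow> bij (poly p)"

text \<open>The cubic multiplicative character eta, relative to the fixed cube roots
  of unity xi (in the field) and delta (in the complex numbers):
  eta 0 = 0, and for c nonzero, eta c = delta ^ j iff c ^ ((q-1)/3) = xi ^ j.\<close>
definition cubic_char :: "'a::{field,finite} \<Rightarrow> complex \<Rightarrow> 'a \<Rightarrow> complex" where
  "cubic_char xi delta c =
     (if c = 0 then 0
      else delta ^ (SOME j::nat. c ^ ((card (UNIV::'a set) - 1) div 3) = xi ^ j))"

end

theory Submission
  imports Defs
begin


lemma roots_pow_bound:
  fixes c :: "'a::field"
  assumes "k \<ge> 1"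
  shows "card {x. x ^ k = c} \<le> k"
proof -
  let ?p = "monom 1 k + [:-c:]"
  have deg: "degree ?p = k" using assms
    by (subst degree_add_eq_left) (auto simp: degree_monom_eq)
  have "?p \<noteq> 0" using deg assms by auto
  from card_poly_roots_bound[OF this] deg
  show ?thesis by (simp add: poly_monom)
qed

lemma finite_field_pow_card:
  fixes x :: "'a::{field,finite}"
  assumes "x \<noteq> 0"
  shows "x ^ (card (UNIV::'a set) - 1) = 1"
proof -
  let ?S = "UNIV - {0::'a}"
  have bij: "bij_betw (\<lambda>y. x * y) ?S ?S"
    unfolding bij_betw_def
  proof
    show "inj_on (\<lambda>y. x * y) ?S" using assms by (auto simp: inj_on_def)
    show "(\<lambda>y. x * y) ` ?S = ?S"
    proof
      show "(\<lambda>y. x * y) ` ?S \<subseteq> ?S" using assms by auto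
      show "?S \<subseteq> (\<lambda>y. x * y) ` ?S"
      proof
        fix z assume "z \<in> ?S"
        then have "z = x * (z / x)" "z / x \<in> ?S" using assms by auto
        then show "z \<in> (\<lambda>y. x * y) ` ?S" by blast
      qed
    qed
  qed
  have "prod (\<lambda>y. y) ?S = prod (\<lambda>y. x * y) ?S"
    using prod.reindex_bij_betw[OF bij, of "\<lambda>y. y"] by simp
  also have "\<dots> = x ^ card ?S * prod (\<lambda>y. y) ?S"
    by (simp add: prod.distrib)
  finally have "x ^ card ?S = 1"
    by (subgoal_tac "prod (\<lambda>y. y) ?S \<noteq> 0") (auto)
  moreover have "card ?S = card (UNIV::'a set) - 1"
    by (simp add: card_Diff_singleton)
  ultimately show ?thesis by simp
qed

lemma cube_root_facts:
  fixes w :: "'a::field"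
  assumes "w ^ 3 = 1" "w \<noteq> 1"
  shows "w ^ 2 + w + 1 = 0" "w \<noteq> 0" "w ^ 2 \<noteq> 1" "w ^ 2 \<noteq> w"
proof -
  have "(w - 1) * (w ^ 2 + w + 1) = w ^ 3 - 1" by (simp add: algebra_simps power2_eq_square power3_eq_cube)
  then show "w ^ 2 + w + 1 = 0" using assms by simp
  show "w \<noteq> 0" using assms by auto
  show "w ^ 2 \<noteq> 1"
  proof
    assume "w ^ 2 = 1"
    then have "w ^ 3 = w" by (simp add: power3_eq_cube power2_eq_square)
    then show False using assms by simp
  qed
  show "w ^ 2 \<noteq> w"
  proof
    assume "w ^ 2 = w"
    then have "w * (w - 1) = 0" by (simp add: algebra_simps power2_eq_square)
    then show False using assms by auto
  qed
qed

lemma cube_root_pow_eq: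
  fixes w :: "'a::field"
  assumes "w ^ 3 = 1" "w \<noteq> 1"
  shows "w ^ i = w ^ j \<longleftrightarrow> i mod 3 = j mod 3"
proof -
  have red: "w ^ k = w ^ (k mod 3)" for k
  proof -
    have "w ^ k = w ^ (3 * (k div 3) + k mod 3)" by simp
    also have "\<dots> = (w ^ 3) ^ (k div 3) * w ^ (k mod 3)" by (simp only: power_add power_mult)
    finally have "w ^ k = (w ^ 3) ^ (k div 3) * w ^ (k mod 3)" .
    then show ?thesis using assms by simp
  qed
  have f: "w ^ 2 \<noteq> 1" "w ^ 2 \<noteq> w" using cube_root_facts[OF assms] by auto
  have c: "k mod 3 = 0 \<or> k mod 3 = 1 \<or> k mod 3 = 2" for k :: nat by presburger
  have "w ^ (i mod 3) = w ^ (j mod 3) \<longleftrightarrow> i mod 3 = j mod 3"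
    using c[of i] c[of j] f assms(2) f[symmetric] assms(2)[symmetric]
    by (elim disjE) simp_all
  then show ?thesis by (simp add: red[of i] red[of j])
qed

lemma cube_roots_all:
  fixes w t :: "'a::field"
  assumes "w ^ 3 = 1" "w \<noteq> 1" "t ^ 3 = 1"
  shows "t = 1 \<or> t = w \<or> t = w ^ 2"
proof -
  have e: "w ^ 2 + w + 1 = 0" using cube_root_facts[OF assms(1,2)] by simp
  have "(t - 1) * (t - w) * (t - w ^ 2) = t^3 - (w^2+w+1) * t^2 + (w^3 + w^2 + w) * t - w^3"
    by (simp add: algebra_simps power2_eq_square power3_eq_cube)
  also have "w^3 + w^2 + w = w * (w ^ 2 + w + 1)" by (simp add: algebra_simps power2_eq_square power3_eq_cube)
  finally have "(t - 1) * (t - w) * (t - w ^ 2) = 0" using e assms by simp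
  then show ?thesis by auto
qed

lemma cubic_char_eq:
  fixes xi c :: "'a::{field,finite}" and delta :: complex
  assumes xi: "xi ^ 3 = 1" "xi \<noteq> 1" and delta: "delta ^ 3 = 1" "delta \<noteq> 1"
    and c: "c \<noteq> 0" "c ^ ((card (UNIV::'a set) - 1) div 3) = xi ^ j"
  shows "cubic_char xi delta c = delta ^ j"
proof -
  let ?M = "(card (UNIV::'a set) - 1) div 3"
  let ?j = "SOME j::nat. c ^ ?M = xi ^ j"
  have "c ^ ?M = xi ^ ?j" using someI[of "\<lambda>j. c ^ ?M = xi ^ j", OF c(2)] .
  then have "xi ^ j = xi ^ ?j" using c(2) by simp
  then have "j mod 3 = ?j mod 3" using cube_root_pow_eq[OF xi] by simp
  then have "delta ^ ?j = delta ^ j" using cube_root_pow_eq[OF delta] by simp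
  then show ?thesis using c(1) by (simp add: cubic_char_def)
qed

lemma card_UN_bound:
  assumes "finite I" "\<And>i. i \<in> I \<Longrightarrow> card (A i) \<le> m"
  shows "card (\<Union>i\<in>I. A i) \<le> card I * m"
proof -
  have "card (\<Union>i\<in>I. A i) \<le> (\<Sum>i\<in>I. card (A i))" using card_UN_le[OF assms(1)] .
  also have "\<dots> \<le> (\<Sum>i\<in>I. m)" using assms(2) by (intro sum_mono) auto
  finally show ?thesis by simp
qed

lemma pow_div_xi:
  fixes xi :: "'a::field"
  assumes "xi ^ 3 = 1"
  shows "xi ^ e1 / xi ^ e0 = xi ^ (e1 + 2 * e0)"
proof -
  have nz: "xi ^ e0 \<noteq> 0" using assms by (metis one_neq_zero power_not_zero zero_power zero_less_numeral)
  have "xi ^ (e1 + 2 * e0) * xi ^ e0 = xi ^ (e1 + 2 * e0 + e0)" by (simp only: power_add)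
  also have "e1 + 2 * e0 + e0 = e1 + 3 * e0" by simp
  also have "xi ^ (e1 + 3 * e0) = xi ^ e1 * (xi ^ 3) ^ e0" by (simp only: power_add power_mult)
  finally have "xi ^ (e1 + 2 * e0) * xi ^ e0 = xi ^ e1 * (xi ^ 3) ^ e0" .
  then show ?thesis using nz assms by (simp add: field_simps)
qed

lemma m3: "(a::nat) mod 3 = b mod 3 \<longleftrightarrow> (3::int) dvd (int a - int b)"
proof -
  have "a mod 3 = b mod 3 \<longleftrightarrow> int (a mod 3) = int (b mod 3)" by simp
  also have "\<dots> \<longleftrightarrow> int a mod 3 = int b mod 3" by (simp add: zmod_int)
  also have "\<dots> \<longleftrightarrow> (3::int) dvd (int a - int b)" by (rule mod_eq_dvd_iff)
  finally show ?thesis .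
qed
lemma dv: "x + y = 3 * (z::int) \<Longrightarrow> (3 dvd x \<longleftrightarrow> 3 dvd y)"
  by (metis dvd_add_right_iff dvd_add_left_iff dvd_triv_left)
lemma dv2: "x - y = 3 * (z::int) \<Longrightarrow> (3 dvd x \<longleftrightarrow> 3 dvd y)"
  by (metis add_diff_cancel_left' diff_add_cancel dvd_add_right_iff dvd_add_left_iff dvd_triv_left)
lemma mod3_c1: "((e1::nat)+2*e0) mod 3 = (2*n) mod 3 \<longleftrightarrow> e0 mod 3 = (n+e1) mod 3"
  unfolding m3 by (rule dv[of _ _ "int e0 - int n"]) (simp add: algebra_simps)
lemma mod3_c2: "((e0::nat)+2*e2) mod 3 = (2*n) mod 3 \<longleftrightarrow> e0 mod 3 = (2*n+e2) mod 3"
  unfolding m3 by (rule dv2[of _ _ "int e2"]) (simp add: algebra_simps)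
lemma mod3_c3: "((e2::nat)+2*e1) mod 3 = (2*n) mod 3 \<longleftrightarrow> (n+e1) mod 3 = (2*n+e2) mod 3"
  unfolding m3 by (rule dv[of _ _ "int e1 - int n"]) (simp add: algebra_simps)


theorem lemma4p1:
  fixes xi a :: "'a::{field,finite}" and delta :: complex and n :: nat
  assumes q_mod: "card (UNIV::'a set) mod 3 = 1"
    and xi: "xi ^ 3 = 1" "xi \<noteq> 1"
    and delta: "delta ^ 3 = 1" "delta \<noteq> 1"
    and n_pos: "n > 0"
  shows "permutation_polynomial
           (monom 1 n * (monom 1 ((card (UNIV::'a set) - 1) div 3) + [:a:]))
         \<longleftrightarrow>
           gcd n ((card (UNIV::'a set) - 1) div 3) = 1
         \<and> a \<notin> {- 1, - xi, - (xi ^ 2)}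
         \<and> cubic_char xi delta ((xi + a) / (1 + a)) \<noteq> delta ^ (2 * n)
         \<and> cubic_char xi delta ((1 + a) / (xi ^ 2 + a)) \<noteq> delta ^ (2 * n)
         \<and> cubic_char xi delta ((xi ^ 2 + a) / (xi + a)) \<noteq> delta ^ (2 * n)"
proof -
  define q where "q = card (UNIV::'a set)"
  define m where "m = (q - 1) div 3"
  define f where "f = (\<lambda>x::'a. x ^ n * (x ^ m + a))"
  define G where "G = (\<lambda>u::'a. u ^ n * (u + a) ^ m)"
  define U where "U = {1, xi, xi ^ 2}"
  define S where "S = UNIV - {0::'a}"
  have q2: "q \<ge> 2" unfolding q_def
  proof -
    have "card {0::'a, 1} \<le> card (UNIV::'a set)" by (rule card_mono) auto
    then show "card (UNIV::'a set) \<ge> 2" by simp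
  qed
  have qm: "q - 1 = 3 * m" unfolding m_def using q_mod q2 unfolding q_def[symmetric] by presburger
  have m1: "m \<ge> 1" using qm q_mod q2 unfolding q_def[symmetric] by presburger
  have cardS: "card S = q - 1" unfolding S_def q_def by (simp add: card_Diff_singleton)
  have xif: "xi ^ 2 + xi + 1 = 0" "xi \<noteq> 0" "xi ^ 2 \<noteq> 1" "xi ^ 2 \<noteq> xi"
    using cube_root_facts[OF xi] by auto
  have Fermat: "x ^ (q - 1) = 1" if "x \<noteq> 0" for x :: 'a
    using finite_field_pow_card[OF that] unfolding q_def .
  have powU: "x ^ m \<in> U" if "x \<noteq> 0" for x :: 'a
  proof -
    have "(x ^ m) ^ 3 = 1" using Fermat[OF that] qm by (simp add: power_mult[symmetric] mult.commute)
    then show ?thesis using cube_roots_all[OF xi] unfolding U_def by blast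
  qed
  have U_xi: "\<exists>k. u = xi ^ k" if "u \<in> U" for u
    using that unfolding U_def by (auto intro: exI[of _ 0] exI[of _ 1] exI[of _ 2])
  have U_nz: "u \<noteq> 0" if "u \<in> U" for u using that xif unfolding U_def by auto
  have fG: "f x ^ m = G (x ^ m)" for x
    unfolding f_def G_def by (simp add: power_mult_distrib power_mult[symmetric] mult.commute)
  have cardU: "card U \<le> 3" unfolding U_def by (simp add: card_insert_le_m1)
  have finU: "finite U" unfolding U_def by simp
  have fib: "card {x::'a. x ^ m = c} \<le> m" for c using roots_pow_bound m1 by blast
  have surjU: "\<exists>x. x ^ m = u" if u: "u \<in> U" for u
  proof (rule ccontr)
    assume nex: "\<not> (\<exists>x. x ^ m = u)"
    have "S \<subseteq> (\<Union>v\<in>U - {u}. {x. x ^ m = v})"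
    proof
      fix x assume "x \<in> S"
      then have "x \<noteq> 0" unfolding S_def by auto
      then have "x ^ m \<in> U" by (rule powU)
      moreover have "x ^ m \<noteq> u" using nex by auto
      ultimately show "x \<in> (\<Union>v\<in>U - {u}. {x. x ^ m = v})" by auto
    qed
    then have "card S \<le> card (\<Union>v\<in>U - {u}. {x. x ^ m = v})" by (intro card_mono) auto
    also have "\<dots> \<le> card (U - {u}) * m" using finU fib by (intro card_UN_bound) auto
    also have "card (U - {u}) \<le> 2" using cardU u finU by (simp add: card_Diff_singleton)
    finally have "card S \<le> 2 * m" using m1 by (meson le_trans mult_le_mono1)
    then show False using cardS qm m1 by simp
  qed
  have bijinj: "bij f \<longleftrightarrow> inj f" by (metis bij_def finite_UNIV_inj_surj finite_class.finite_UNIV)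
  have pf: "poly (monom 1 n * (monom 1 m + [:a:])) = f"
    unfolding f_def by (simp add: poly_monom fun_eq_iff)
  define Ginj where "Ginj \<longleftrightarrow> G 1 \<noteq> G xi \<and> G 1 \<noteq> G (xi ^ 2) \<and> G xi \<noteq> G (xi ^ 2)"
  define B where "B \<longleftrightarrow> a \<notin> {- 1, - xi, - (xi ^ 2)}"
  define C where "C \<longleftrightarrow> cubic_char xi delta ((xi + a) / (1 + a)) \<noteq> delta ^ (2 * n)
         \<and> cubic_char xi delta ((1 + a) / (xi ^ 2 + a)) \<noteq> delta ^ (2 * n)
         \<and> cubic_char xi delta ((xi ^ 2 + a) / (xi + a)) \<noteq> delta ^ (2 * n)"
  have BC: "C \<longleftrightarrow> Ginj" if B
  proof -
    have nz: "1 + a \<noteq> 0" "xi + a \<noteq> 0" "xi ^ 2 + a \<noteq> 0" using \<open>B\<close> unfolding B_def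
      by (auto simp: add_eq_0_iff)
    obtain e0 where e0: "(1 + a) ^ m = xi ^ e0" using U_xi powU nz(1) by blast
    obtain e1 where e1: "(xi + a) ^ m = xi ^ e1" using U_xi powU nz(2) by blast
    obtain e2 where e2: "(xi ^ 2 + a) ^ m = xi ^ e2" using U_xi powU nz(3) by blast
    have "((xi + a) / (1 + a)) ^ m = xi ^ (e1 + 2 * e0)" using e1 e0 pow_div_xi[OF xi(1)] by (simp add: power_divide)
    moreover have "(xi + a) / (1 + a) \<noteq> 0" using nz by simp
    ultimately have c1: "cubic_char xi delta ((xi + a) / (1 + a)) = delta ^ (e1 + 2 * e0)"
      using cubic_char_eq[OF xi delta] unfolding m_def q_def by blast
    have "((1 + a) / (xi ^ 2 + a)) ^ m = xi ^ (e0 + 2 * e2)" using e0 e2 pow_div_xi[OF xi(1)] by (simp add: power_divide)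
    moreover have "(1 + a) / (xi ^ 2 + a) \<noteq> 0" using nz by simp
    ultimately have c2: "cubic_char xi delta ((1 + a) / (xi ^ 2 + a)) = delta ^ (e0 + 2 * e2)"
      using cubic_char_eq[OF xi delta] unfolding m_def q_def by blast
    have "((xi ^ 2 + a) / (xi + a)) ^ m = xi ^ (e2 + 2 * e1)" using e2 e1 pow_div_xi[OF xi(1)] by (simp add: power_divide)
    moreover have "(xi ^ 2 + a) / (xi + a) \<noteq> 0" using nz by simp
    ultimately have c3: "cubic_char xi delta ((xi ^ 2 + a) / (xi + a)) = delta ^ (e2 + 2 * e1)"
      using cubic_char_eq[OF xi delta] unfolding m_def q_def by blast
    have g0: "G 1 = xi ^ e0" unfolding G_def using e0 by simp
    have g1: "G xi = xi ^ (n + e1)" unfolding G_def using e1 by (simp add: power_add)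
    have g2: "G (xi ^ 2) = xi ^ (2 * n + e2)" unfolding G_def using e2
      by (simp add: power_add power_mult[symmetric] mult.commute)
    show ?thesis unfolding C_def Ginj_def c1 c2 c3 g0 g1 g2
      cube_root_pow_eq[OF xi] cube_root_pow_eq[OF delta]
      by (simp only: mod3_c1[of e1 e0 n] mod3_c2[of e0 e2 n] mod3_c3[of e2 e1 n])
  qed
  have inj_gcd: "gcd n m = 1" if inj: "inj f"
  proof (rule ccontr)
    define d where "d = gcd n m"
    assume "gcd n m \<noteq> 1"
    have "0 < d" unfolding d_def using n_pos by simp
    then have d2: "d \<ge> 2" using \<open>gcd n m \<noteq> 1\<close> unfolding d_def by linarith
    have dq: "d dvd q - 1" unfolding d_def qm by simp
    obtain k where k: "q - 1 = d * k" using dq by blast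
    have k1: "k \<ge> 1" using k qm m1 by (metis One_nat_def Suc_leI add_is_0 mult_is_0 nat_0_less_mult_iff not_gr0 one_neq_zero zero_neq_numeral)
    have "\<exists>z::'a. z ^ d = 1 \<and> z \<noteq> 1"
    proof (rule ccontr)
      assume nz: "\<not> (\<exists>z::'a. z ^ d = 1 \<and> z \<noteq> 1)"
      have "S \<subseteq> {x. x ^ k = 1}"
      proof
        fix x assume "x \<in> S"
        then have "x \<noteq> 0" unfolding S_def by auto
        then have "(x ^ k) ^ d = 1" using Fermat k by (simp add: power_mult[symmetric] mult.commute)
        then show "x \<in> {x. x ^ k = 1}" using nz by auto
      qed
      then have "card S \<le> card {x::'a. x ^ k = 1}" by (intro card_mono) simp_all
      then have "card S \<le> k" using roots_pow_bound[OF k1, of "1::'a"] by linarith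
      moreover have "k < d * k" using d2 k1 by simp
      ultimately show False using cardS k by simp
    qed
    then obtain z :: 'a where z: "z ^ d = 1" "z \<noteq> 1" by blast
    have "z ^ n = 1" using z(1) unfolding d_def
      by (metis dvd_def gcd_dvd1 power_mult power_one)
    moreover have "z ^ m = 1" using z(1) unfolding d_def
      by (metis dvd_def gcd_dvd2 power_mult power_one)
    ultimately have "f z = f 1" unfolding f_def by simp
    then show False using inj z(2) by (auto dest: injD)
  qed
  have inj_B: B if inj: "inj f"
  proof -
    have "a \<noteq> - u" if u: "u \<in> U" for u
    proof
      assume a: "a = - u"
      obtain x where x: "x ^ m = u" using surjU[OF u] by blast
      have "x \<noteq> 0" using x U_nz[OF u] m1 by (metis zero_power One_nat_def Suc_le_eq)
      moreover have "f x = f 0" unfolding f_def using x a m1 n_pos by simp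
      ultimately show False using inj by (auto dest: injD)
    qed
    then show B unfolding B_def U_def by auto
  qed
  have inj_G: Ginj if inj: "inj f"
  proof (rule ccontr)
    assume nG: "\<not> Ginj"
    have cGU: "card (G ` U) \<le> 2" using nG unfolding Ginj_def U_def
      by (auto simp: card_insert_if)
    have "f ` S \<subseteq> (\<Union>c\<in>G ` U. {z. z ^ m = c})"
    proof
      fix y assume "y \<in> f ` S"
      then obtain x where "x \<in> S" "y = f x" by blast
      then have "x \<noteq> 0" "y ^ m = G (x ^ m)" using fG unfolding S_def by auto
      then show "y \<in> (\<Union>c\<in>G ` U. {z. z ^ m = c})" using powU by blast
    qed
    then have "card (f ` S) \<le> card (\<Union>c\<in>G ` U. {z. z ^ m = c})" by (intro card_mono) auto
    also have "\<dots> \<le> card (G ` U) * m" using finU fib by (intro card_UN_bound) auto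
    finally have "card (f ` S) \<le> 2 * m" using cGU by (meson le_trans mult_le_mono1)
    moreover have "card (f ` S) = card S" using inj by (simp add: card_image inj_on_subset)
    ultimately show False using cardS qm m1 by simp
  qed
  have rev: "inj f" if g: "gcd n m = 1" and b: B and gi: Ginj
  proof (rule injI)
    fix x y assume fxy: "f x = f y"
    have aU: "a \<noteq> - u" if "u \<in> U" for u using b that unfolding B_def U_def by auto
    have zero: "y = 0" if "x = 0" "f x = f y" for x y
    proof (rule ccontr)
      assume "y \<noteq> 0"
      moreover have "f 0 = 0" unfolding f_def using n_pos by (simp add: power_0_left)
      then have "f y = 0" using that by simp
      ultimately have "y ^ m + a = 0" unfolding f_def by simp
      then have "a = - (y ^ m)" by (simp add: eq_neg_iff_add_eq_0 add.commute)
      then show False using aU powU \<open>y \<noteq> 0\<close> by blast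
    qed
    show "x = y"
    proof (cases "x = 0 \<or> y = 0")
      case True
      then show ?thesis using zero fxy by metis
    next
      case False
      then have nz: "x \<noteq> 0" "y \<noteq> 0" by auto
      have uU: "x ^ m \<in> U" "y ^ m \<in> U" using powU nz by auto
      have "G (x ^ m) = G (y ^ m)" using fG fxy by metis
      then have um: "x ^ m = y ^ m" using uU gi unfolding Ginj_def U_def by auto
      have "x ^ m + a \<noteq> 0" using aU uU by (metis add.commute eq_neg_iff_add_eq_0)
      then have un: "x ^ n = y ^ n" using fxy um unfolding f_def by simp
      define r where "r = x / y"
      have rn: "r ^ n = 1" "r ^ m = 1" using un um nz unfolding r_def by (simp_all add: power_divide)
      obtain i j where ij: "n * i = m * j + gcd n m" using bezout_nat[of n m] n_pos by auto
      have "r = r ^ (m * j + 1)" using rn by (simp add: power_add power_mult)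
      also have "\<dots> = r ^ (n * i)" using ij g by simp
      also have "\<dots> = 1" using rn by (simp add: power_mult)
      finally show "x = y" using nz unfolding r_def by simp
    qed
  qed
  have "permutation_polynomial (monom 1 n * (monom 1 m + [:a:])) \<longleftrightarrow> gcd n m = 1 \<and> B \<and> C"
    unfolding permutation_polynomial_def pf bijinj
  proof
    assume i: "inj f"
    show "gcd n m = 1 \<and> B \<and> C" using inj_gcd[OF i] inj_B[OF i] inj_G[OF i] BC by simp
  next
    assume h: "gcd n m = 1 \<and> B \<and> C"
    show "inj f" using h BC rev by simp
  qed
  then show ?thesis unfolding m_def q_def B_def C_def .
qed

end
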